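(* Every set star Lindelöf space of cardinality less than $\mathfrak d$ is set star Menger.
   Context: For a family $\mathcal U$ of subsets of $X$ and $A\subseteq X$, $st(A,\mathcal U)=\bigcup\{U\in\mathcal U: U\cap A\neq\emptyset\}$. $X$ is set star Lindelöf if for every nonempty $A\subseteq X$ and every family $\mathcal U$ of open subsets of $X$ with $\overline A\subseteq\bigcup\mathcal U$ there is a countable $\mathcal V\subseteq\mathcal U$ with $A\subseteq st(\bigcup\mathcal V,\mathcal U)$. $X$ is set star Menger if for every nonempty $A\subseteq X$ and every sequence $(\mathcal U_n:n\in\omega)$ of families of open sets with $\overline A\subseteq\bigcup\mathcal U_n$ for all $n$, there are finite $\mathcal V_n\subseteq\mathcal U_n$ with $A\subseteq\bigcup_n st(\bigcup\mathcal V_n,\mathcal U_n)$. $\mathfrak d$ is the minimal cardinality of a cofinal subset of $(\omega^\omega,\leq^* )$, where $f\leq^* g$ means $f(n)\leq g(n)$ for all but finitely many $n$. *)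

theory Defs
  imports "HOL-Analysis.Analysis"
begin

definition st :: "'a set \<Rightarrow> 'a set set \<Rightarrow> 'a set" where
  "st A \<U> = \<Union>{U \<in> \<U>. U \<inter> A \<noteq> {}}"

definition set_star_Lindelof :: "'a topology \<Rightarrow> bool" where
  "set_star_Lindelof X \<longleftrightarrow>
     (\<forall>A \<U>. A \<noteq> {} \<and> A \<subseteq> topspace X \<and> (\<forall>U\<in>\<U>. openin X U) \<and> X closure_of A \<subseteq> \<Union>\<U>
        \<longrightarrow> (\<exists>\<V>. \<V> \<subseteq> \<U> \<and> countable \<V> \<and> A \<subseteq> st (\<Union>\<V>) \<U>))"

definition set_star_Menger :: "'a topology \<Rightarrow> bool" where
  "set_star_Menger X \<longleftrightarrow>
     (\<forall>A (\<U> :: nat \<Rightarrow> 'a set set). A \<noteq> {} \<and> A \<subseteq> topspace X \<and>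
        (\<forall>n. (\<forall>U\<in>\<U> n. openin X U) \<and> X closure_of A \<subseteq> \<Union>(\<U> n))
        \<longrightarrow> (\<exists>\<V> :: nat \<Rightarrow> 'a set set. (\<forall>n. finite (\<V> n) \<and> \<V> n \<subseteq> \<U> n) \<and>
                A \<subseteq> (\<Union>n. st (\<Union>(\<V> n)) (\<U> n))))"

definition le_star :: "(nat \<Rightarrow> nat) \<Rightarrow> (nat \<Rightarrow> nat) \<Rightarrow> bool" where
  "le_star f g \<longleftrightarrow> finite {n. \<not> f n \<le> g n}"

definition cofinal_family :: "(nat \<Rightarrow> nat) set \<Rightarrow> bool" where
  "cofinal_family F \<longleftrightarrow> (\<forall>g. \<exists>f\<in>F. le_star g f)"

text \<open>|S| < \<dd>: the cardinality of S is strictly below the cardinality of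
  every cofinal subset of (\<omega>^\<omega>, \<le>*), i.e. below their minimum.\<close>
definition card_less_d :: "'a set \<Rightarrow> bool" where
  "card_less_d S \<longleftrightarrow> (\<forall>F. cofinal_family F \<longrightarrow> (card_of S, card_of F) \<in> ordLess)"

end

theory Submission
  imports Defs
begin

lemma st_mono: "B \<subseteq> C \<Longrightarrow> st B U \<subseteq> st C U"
  unfolding st_def by blast

theorem proposition2p5:
  fixes X :: "'a topology"
  assumes "set_star_Lindelof X"
    and "card_less_d (topspace X)"
  shows "set_star_Menger X"
  unfolding set_star_Menger_def
proof (intro allI impI, elim conjE)
  fix A and U :: "nat \<Rightarrow> 'a set set"
  assume An: "A \<noteq> {}" and AX: "A \<subseteq> topspace X"
    and H: "\<forall>n. (\<forall>W\<in>U n. openin X W) \<and> X closure_of A \<subseteq> \<Union>(U n)"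
  have "\<forall>n. \<exists>V. V \<subseteq> U n \<and> countable V \<and> A \<subseteq> st (\<Union>V) (U n)"
  proof
    fix n
    have "(\<forall>W\<in>U n. openin X W)" "X closure_of A \<subseteq> \<Union>(U n)" using H by auto
    then show "\<exists>V. V \<subseteq> U n \<and> countable V \<and> A \<subseteq> st (\<Union>V) (U n)"
      using assms(1)[unfolded set_star_Lindelof_def, rule_format, of A "U n"] An AX by blast
  qed
  from choice[OF this] obtain V where V0: "\<forall>n. V n \<subseteq> U n \<and> countable (V n) \<and> A \<subseteq> st (\<Union>(V n)) (U n)"
    by blast
  have V: "\<And>n. V n \<subseteq> U n" "\<And>n. countable (V n)" "\<And>n. A \<subseteq> st (\<Union>(V n)) (U n)"
    using V0 by auto
  have Vne: "V n \<noteq> {}" for n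
    using V(3)[of n] An unfolding st_def by auto
  define e where "e n k = from_nat_into (V n) k" for n k
  have eU: "e n k \<in> U n" for n k
    using from_nat_into[OF Vne] V(1) unfolding e_def by blast
  have ex: "\<exists>k. x \<in> st (e n k) (U n)" if "x \<in> A" for x n
  proof -
    have "x \<in> st (\<Union>(V n)) (U n)" using that V(3)[of n] by (rule subsetD[rotated])
    then obtain W where W: "W \<in> U n" "W \<inter> \<Union>(V n) \<noteq> {}" "x \<in> W"
      unfolding st_def by auto
    then obtain B where B: "B \<in> V n" "W \<inter> B \<noteq> {}" by auto
    obtain k where k: "B = e n k"
      using from_nat_into_surj[OF V(2) B(1)] unfolding e_def by auto
    have "W \<in> {Z \<in> U n. Z \<inter> e n k \<noteq> {}}" using W B k by auto
    then have "x \<in> st (e n k) (U n)" unfolding st_def using W(3) by (rule UnionI)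
    then show ?thesis ..
  qed
  define f where "f x n = (LEAST k. x \<in> st (e n k) (U n))" for x n
  have fx: "x \<in> st (e n (f x n)) (U n)" if "x \<in> A" for x n
    unfolding f_def using LeastI_ex[OF ex[OF that]] .
  have "\<not> cofinal_family (f ` A)"
  proof
    assume "cofinal_family (f ` A)"
    then have "(card_of (topspace X), card_of (f ` A)) \<in> ordLess"
      using assms(2) unfolding card_less_d_def by blast
    moreover have "(card_of (f ` A), card_of (topspace X)) \<in> ordLeq"
      using ordLeq_transitive[OF card_of_image card_of_mono1[OF AX]] .
    ultimately show False using not_ordLess_ordLeq by blast
  qed
  then obtain g where g: "\<And>x. x \<in> A \<Longrightarrow> \<not> le_star g (f x)"
    unfolding cofinal_family_def by blast
  define W where "W n = e n ` {..g n}" for n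
  show "\<exists>\<V>. (\<forall>n. finite (\<V> n) \<and> \<V> n \<subseteq> U n) \<and> A \<subseteq> (\<Union>n. st (\<Union>(\<V> n)) (U n))"
  proof (intro exI conjI)
    show "\<forall>n. finite (W n) \<and> W n \<subseteq> U n" unfolding W_def using eU by auto
  next
    show "A \<subseteq> (\<Union>n. st (\<Union>(W n)) (U n))"
    proof

    fix x assume x: "x \<in> A"
    have "infinite {n. \<not> g n \<le> f x n}" using g[OF x] unfolding le_star_def by blast
    then obtain n where n: "\<not> g n \<le> f x n" using not_finite_existsD by blast
    have "e n (f x n) \<subseteq> \<Union>(W n)" unfolding W_def using n by (intro Union_upper imageI) simp
    then have "x \<in> st (\<Union>(W n)) (U n)" using subsetD[OF st_mono fx[OF x]] by blast
    then show "x \<in> (\<Union>n. st (\<Union>(W n)) (U n))" by blast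
  qed
  qed
qed

end
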